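(* Let $\eta_1,\dots,\eta_{d-1}$ satisfy $0<\eta_l<\zeta_l(\mu)$ for all $l$, and put $\eta=\min_{1\le l\le d-1}w_l\eta_l$. Then there is a constant $C>0$ such that for all $1\le l\le d-1$, $r\in\Xi$, $t>1$ and every nonzero decomposable $v=v_1\wedge\dots\wedge v_l\in V_l$, $$\int_{M_{m\times n}(\mathbb R)}\|g_tu(x)v\|^{-\eta_l}\,d\mu^{(r)}(x)\le C\,t^{-\eta}\|v\|^{-\eta_l}.$$
   Context: Let $m,n\ge1$, $d=m+n$, $a_1\ge\dots\ge a_m>0$, $b_1\ge\dots\ge b_n>0$, $\sum a_i=\sum b_j=1$. For $t>0$, $g_t=\mathrm{diag}(t^{a_1},\dots,t^{a_m},t^{-b_1},\dots,t^{-b_n})$; $u(\theta)=\begin{pmatrix}I_m&\theta\\0&I_n\end{pmatrix}$. For $1\le l\le d-1$, $w_l=a_m+\dots+a_{m+1-l}$ if $l\le m$ and $w_l=1-(b_1+\dots+b_{l-m})$ if $l>m$. $V_l=\bigwedge^l\mathbb R^d$ with $g$ acting by $\wedge^lg$; with $e_I=e_{i_1}\wedge\dots\wedge e_{i_l}$, write $v=\sum v_Ie_I$, $\|v\|=\max_I|v_I|$. $V_l^+=\mathrm{span}\{e_I:\#(I\cap\{1,\dots,m\})=\min\{l,m\}\}$, $\pi_{l+}$ the projection onto $V_l^+$ along the span of the other $e_I$. For each $i,j$, $\Phi_{ij}$ is a finite IFS on $\mathbb R$ of maps $x\mapsto c_{ij}x+w_{ij,e}$ with common ratio $c_{ij}\in(0,1)$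 satisfying the open set condition, with limit set $\mathcal K_{ij}$ of dimension $s_{ij}>0$; $\mu_{ij}$ is the normalised $s_{ij}$-dimensional Hausdorff measure on $\mathcal K_{ij}$, $\mu=\bigotimes\mu_{ij}$; $\Xi=\{r\in M_{m\times n}(\mathbb R):r_{ij}\in[c_{ij},c_{ij}^{-1}]\}$ and $\mu^{(r)}=\bigotimes\mu^{(r)}_{ij}$ with $\mu^{(r)}_{ij}$ the pushforward of $\mu_{ij}$ by $x\mapsto r_{ij}x$. The critical exponent $\zeta_l(\mu)$ is the supremum of $\gamma\ge0$ such that for some $C>0$, $\int\|\pi_{l+}(u(\theta)v)\|^{-\gamma}d\mu^{(r)}(\theta)<C$ for all decomposable $v\in V_l$ with $\|v\|=1$ and all $r\in\Xi$. *)

theory Defs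
  imports "HOL-Probability.Probability" "Jordan_Normal_Form.Determinant" "Jordan_Normal_Form.DL_Submatrix"
begin

definition hausdorff_pre :: "real \<Rightarrow> real \<Rightarrow> real set \<Rightarrow> ennreal" where
  "hausdorff_pre s \<delta> A =
     (INF U \<in> {U :: nat \<Rightarrow> real set. A \<subseteq> (\<Union>i. U i) \<and> (\<forall>i. bounded (U i) \<and> diameter (U i) \<le> \<delta>)}.
        (\<Sum>i. ennreal (diameter (U i) powr s)))"

definition hausdorff_outer :: "real \<Rightarrow> real set \<Rightarrow> ennreal" where
  "hausdorff_outer s A = (SUP \<delta> \<in> {0<..}. hausdorff_pre s \<delta> A)"

definition hausdorff_dim :: "real set \<Rightarrow> real" where
  "hausdorff_dim A = Inf {s. 0 \<le> s \<and> hausdorff_outer s A = 0}"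

definition hausdorff_prob :: "real \<Rightarrow> real set \<Rightarrow> real measure" where
  "hausdorff_prob s K = measure_of UNIV (sets borel) (\<lambda>A. hausdorff_outer s (A \<inter> K) / hausdorff_outer s K)"

text \<open>The IFS is given by its common ratio c and the finite set W of translation parts:
  maps x \<mapsto> c x + w, w \<in> W.\<close>
definition ifs_map :: "real \<Rightarrow> real \<Rightarrow> real \<Rightarrow> real" where
  "ifs_map c w x = c * x + w"

definition open_set_condition :: "real \<Rightarrow> real set \<Rightarrow> bool" where
  "open_set_condition c W \<longleftrightarrow>
     (\<exists>U. open U \<and> U \<noteq> {} \<and> (\<forall>w\<in>W. ifs_map c w ` U \<subseteq> U) \<and>
          (\<forall>w\<in>W. \<forall>w'\<in>W. w \<noteq> w' \<longrightarrow> ifs_map c w ` U \<inter> ifs_map c w' ` U = {}))"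

definition is_limit_set :: "real \<Rightarrow> real set \<Rightarrow> real set \<Rightarrow> bool" where
  "is_limit_set c W K \<longleftrightarrow> compact K \<and> K \<noteq> {} \<and> K = (\<Union>w\<in>W. ifs_map c w ` K)"

section \<open>Matrices and exterior powers (0-based indices, d = m + n)\<close>

text \<open>Vectors of V_l are functions on l-subsets of {0..<d}; v I is the coefficient of e_I.\<close>
definition lsubsets :: "nat \<Rightarrow> nat \<Rightarrow> nat set set" where
  "lsubsets d l = {I. I \<subseteq> {0..<d} \<and> card I = l}"

definition ext_norm :: "nat \<Rightarrow> nat \<Rightarrow> (nat set \<Rightarrow> real) \<Rightarrow> real" where
  "ext_norm d l v = Max ((\<lambda>I. \<bar>v I\<bar>) ` lsubsets d l)"

text \<open>action of \<wedge>^l A on V_l: coefficient of e_I in (\<wedge>^l A) v\<close>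
definition ext_act :: "nat \<Rightarrow> nat \<Rightarrow> real mat \<Rightarrow> (nat set \<Rightarrow> real) \<Rightarrow> (nat set \<Rightarrow> real)" where
  "ext_act d l A v = (\<lambda>I. if I \<in> lsubsets d l then (\<Sum>J\<in>lsubsets d l. det (submatrix A I J) * v J) else 0)"

text \<open>v_1 \<wedge> ... \<wedge> v_l, where the v_k are the columns of the d x l matrix V\<close>
definition wedge :: "nat \<Rightarrow> nat \<Rightarrow> real mat \<Rightarrow> (nat set \<Rightarrow> real)" where
  "wedge d l V = (\<lambda>I. if I \<in> lsubsets d l then det (submatrix V I {0..<l}) else 0)"

text \<open>projection onto V_l^+ along the other basis vectors\<close>
definition proj_plus :: "nat \<Rightarrow> nat \<Rightarrow> nat \<Rightarrow> (nat set \<Rightarrow> real) \<Rightarrow> (nat set \<Rightarrow> real)" where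
  "proj_plus m d l v = (\<lambda>I. if card (I \<inter> {0..<m}) = min l m then v I else 0)"

definition u_mat :: "nat \<Rightarrow> nat \<Rightarrow> (nat \<times> nat \<Rightarrow> real) \<Rightarrow> real mat" where
  "u_mat m n \<theta> = mat (m + n) (m + n)
     (\<lambda>(p, q). if p = q then 1 else if p < m \<and> m \<le> q then \<theta> (p, q - m) else 0)"

definition g_mat :: "nat \<Rightarrow> nat \<Rightarrow> (nat \<Rightarrow> real) \<Rightarrow> (nat \<Rightarrow> real) \<Rightarrow> real \<Rightarrow> real mat" where
  "g_mat m n a b t = mat (m + n) (m + n)
     (\<lambda>(p, q). if p = q then (if p < m then t powr a p else t powr (- b (p - m))) else 0)"

text \<open>the weights w_l (a, b indexed from 0)\<close>
definition wl :: "nat \<Rightarrow> (nat \<Rightarrow> real) \<Rightarrow> (nat \<Rightarrow> real) \<Rightarrow> nat \<Rightarrow> real" where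
  "wl m a b l = (if l \<le> m then (\<Sum>i\<in>{m - l..<m}. a i) else 1 - (\<Sum>j<l - m. b j))"

definition inv_pow :: "real \<Rightarrow> real \<Rightarrow> ennreal" where
  "inv_pow x \<gamma> = (if x = 0 then \<infinity> else ennreal (x powr (- \<gamma>)))"

definition Xi :: "nat \<Rightarrow> nat \<Rightarrow> (nat \<Rightarrow> nat \<Rightarrow> real) \<Rightarrow> (nat \<Rightarrow> nat \<Rightarrow> real) set" where
  "Xi m n c = {r. \<forall>i<m. \<forall>j<n. c i j \<le> r i j \<and> r i j \<le> 1 / c i j}"

text \<open>\<mu>^(r) on M_{m x n}(R), matrices being functions on {0..<m} x {0..<n}\<close>
definition mu_r :: "nat \<Rightarrow> nat \<Rightarrow> (nat \<Rightarrow> nat \<Rightarrow> real measure) \<Rightarrow> (nat \<Rightarrow> nat \<Rightarrow> real)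
                     \<Rightarrow> (nat \<times> nat \<Rightarrow> real) measure" where
  "mu_r m n \<mu> r = PiM ({0..<m} \<times> {0..<n}) (\<lambda>(i, j). distr (\<mu> i j) borel (\<lambda>x. r i j * x))"

definition crit_exp :: "nat \<Rightarrow> nat \<Rightarrow> (nat \<Rightarrow> nat \<Rightarrow> real) \<Rightarrow> (nat \<Rightarrow> nat \<Rightarrow> real measure) \<Rightarrow> nat \<Rightarrow> ereal" where
  "crit_exp m n c \<mu> l = Sup (ereal ` {\<gamma>. 0 \<le> \<gamma> \<and> (\<exists>C>0. \<forall>V \<in> carrier_mat (m + n) l. \<forall>r \<in> Xi m n c.
       ext_norm (m + n) l (wedge (m + n) l V) = 1 \<longrightarrow>
       (\<integral>\<^sup>+ \<theta>. inv_pow (ext_norm (m + n) l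
            (proj_plus m (m + n) l (ext_act (m + n) l (u_mat m n \<theta>) (wedge (m + n) l V)))) \<gamma>
          \<partial>mu_r m n \<mu> r) < ennreal C)})"

end

theory Submission
  imports Defs
begin


lemma hp_space: "space (hausdorff_prob s K) = UNIV"
  unfolding hausdorff_prob_def by (simp add: space_measure_of_conv)

lemma hp_sets: "sets (hausdorff_prob s K) = sets borel"
  unfolding hausdorff_prob_def using sets.sigma_sets_eq[of borel] by (simp add: sets_measure_of_conv)

lemma ennreal_div_self_le: "(x::ennreal) / x \<le> 1"
  by (cases "x = 0"; cases "x = \<infinity>") (auto simp: top.not_eq_extremum)

lemma hp_mass: "emeasure (hausdorff_prob s K) (space (hausdorff_prob s K)) \<le> 1"
  unfolding hp_space unfolding hausdorff_prob_def emeasure_measure_of_conv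
  using ennreal_div_self_le by auto

lemma mu_r_sets: "sets (mu_r m n (\<lambda>i j. hausdorff_prob (s i j) (K i j)) r)
   = sets (PiM ({0..<m} \<times> {0..<n}) (\<lambda>_. borel))"
  unfolding mu_r_def by (rule sets_PiM_cong) (auto simp: hp_sets)

lemma mu_r_mass: "emeasure (mu_r m n (\<lambda>i j. hausdorff_prob (s i j) (K i j)) r)
   (space (mu_r m n (\<lambda>i j. hausdorff_prob (s i j) (K i j)) r)) \<le> 1"
proof -
  define M where "M = (\<lambda>(i, j). distr (hausdorff_prob (s i j) (K i j)) borel (\<lambda>x. r i j * x))"
  have mass: "emeasure (M p) (space (M p)) \<le> 1" for p
  proof -
    obtain i j where p: "p = (i,j)" by force
    have meas: "(\<lambda>x. r i j * x) \<in> measurable (hausdorff_prob (s i j) (K i j)) borel"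
      proof -
      have "measurable (hausdorff_prob (s i j) (K i j)) (borel::real measure) = measurable borel borel"
        by (rule measurable_cong_sets[OF hp_sets refl])
      then show ?thesis by simp
    qed
    have "emeasure (M p) (space (M p)) = emeasure (hausdorff_prob (s i j) (K i j)) 
           ((\<lambda>x. r i j * x) -` UNIV \<inter> space (hausdorff_prob (s i j) (K i j)))"
      unfolding M_def p using meas by (simp add: emeasure_distr)
    also have "\<dots> \<le> 1" using hp_mass by simp
    finally show ?thesis .
  qed
  have fin: "finite_measure (M p)" for p
    using mass[of p] by (intro finite_measureI) (auto simp: top_unique)
  interpret product_sigma_finite M
    using fin by (simp add: product_sigma_finite_def finite_measure.sigma_finite_measure)
  have "emeasure (PiM ({0..<m} \<times> {0..<n}) M) (PiE ({0..<m} \<times> {0..<n}) (\<lambda>p. space (M p)))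
        = (\<Prod>p\<in>{0..<m} \<times> {0..<n}. emeasure (M p) (space (M p)))"
    by (rule emeasure_PiM) auto
  also have "\<dots> \<le> (\<Prod>p\<in>{0..<m} \<times> {0..<n}. 1)"
    by (rule prod_mono_ennreal) (auto simp: mass)
  finally show ?thesis unfolding mu_r_def M_def[symmetric] space_PiM by simp
qed



abbreviation "M0 m n \<equiv> PiM ({0..<m} \<times> {0..<n}) (\<lambda>_. borel :: real measure)"

lemma u_mat_carrier: "u_mat m n \<theta> \<in> carrier_mat (m+n) (m+n)"
  unfolding u_mat_def by simp

lemma u_entry_meas:
  assumes "p < m+n" "q < m+n"
  shows "(\<lambda>\<theta>. u_mat m n \<theta> $$ (p,q)) \<in> borel_measurable (M0 m n)"
proof -
  have e: "u_mat m n \<theta> $$ (p,q) = (if p = q then 1 else if p < m \<and> m \<le> q then \<theta> (p, q - m) else 0)" for \<theta>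
    unfolding u_mat_def using assms by simp
  show ?thesis unfolding e
  proof (cases "p < m \<and> m \<le> q")
    case True
    then have "(p, q-m) \<in> {0..<m} \<times> {0..<n}" using assms by auto
    then have "(\<lambda>\<theta>. \<theta> (p, q - m)) \<in> borel_measurable (M0 m n)"
      by (rule measurable_component_singleton)
    then show "(\<lambda>\<theta>. if p = q then 1 else if p < m \<and> m \<le> q then \<theta> (p, q - m) else 0) \<in> borel_measurable (M0 m n)"
      by simp
  next
    case False
    then have "(\<lambda>\<theta>::nat\<times>nat\<Rightarrow>real. if p = q then 1 else if p < m \<and> m \<le> q then \<theta> (p, q - m) else 0) = (\<lambda>\<theta>. if p = q then 1 else 0)"
      by auto
    then show "(\<lambda>\<theta>. if p = q then 1 else if p < m \<and> m \<le> q then \<theta> (p, q - m) else 0) \<in> borel_measurable (M0 m n)"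
      by simp
  qed
qed

lemma det_meas:
  assumes "\<And>\<theta>. A \<theta> \<in> carrier_mat k k"
    and "\<And>i j. i<k \<Longrightarrow> j<k \<Longrightarrow> (\<lambda>\<theta>. A \<theta> $$ (i,j) :: real) \<in> borel_measurable M"
  shows "(\<lambda>\<theta>. det (A \<theta>)) \<in> borel_measurable M"
proof -
  have eq: "(\<lambda>\<theta>. det (A \<theta>)) = (\<lambda>\<theta>. \<Sum>p\<in>{p. p permutes {0..<k}}. signof p * (\<Prod>i\<in>{0..<k}. A \<theta> $$ (i, p i)))"
    using det_def' assms(1) by blast
  have pi: "p permutes {0..<k} \<Longrightarrow> i < k \<Longrightarrow> p i < k" for p i
    using permutes_in_image[of p "{0..<k}" i] by auto
  show ?thesis unfolding eq
    by (intro borel_measurable_sum borel_measurable_times borel_measurable_prod borel_measurable_const assms(2)) (auto simp: pi)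
qed

lemma lsub_card: "I \<in> lsubsets d l \<Longrightarrow> {i. i < d \<and> i \<in> I} = I"
  unfolding lsubsets_def by auto

lemma submatrix_carrier:
  assumes "A \<in> carrier_mat d d" "I \<in> lsubsets d l" "J \<in> lsubsets d l"
  shows "submatrix A I J \<in> carrier_mat l l"
  using assms lsub_card[OF assms(2)] lsub_card[OF assms(3)] unfolding lsubsets_def
  by (auto simp: submatrix_def)

lemma pick_lsub:
  assumes "I \<in> lsubsets d l" "i < l"
  shows "pick I i \<in> I" "pick I i < d"
  using assms pick_in_set_le[of i I] unfolding lsubsets_def by auto

lemma submatrix_entry:
  assumes "A \<in> carrier_mat d d" "I \<in> lsubsets d l" "J \<in> lsubsets d l" "i < l" "j < l"
  shows "submatrix A I J $$ (i,j) = A $$ (pick I i, pick J j)"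
  apply (rule submatrix_index)
  using assms lsub_card[OF assms(2)] lsub_card[OF assms(3)] unfolding lsubsets_def by auto

lemma finite_lsub: "finite (lsubsets d l)"
  unfolding lsubsets_def by (rule finite_subset[of _ "Pow {0..<d}"]) auto

lemma proj_meas:
  assumes "l \<le> m + n"
  shows "(\<lambda>\<theta>. inv_pow (ext_norm (m+n) l (proj_plus m (m+n) l (ext_act (m+n) l (u_mat m n \<theta>) w))) \<gamma>)
     \<in> borel_measurable (M0 m n)"
proof -
  have dm: "(\<lambda>\<theta>. det (submatrix (u_mat m n \<theta>) I J)) \<in> borel_measurable (M0 m n)"
    if "I \<in> lsubsets (m+n) l" "J \<in> lsubsets (m+n) l" for I J
    apply (rule det_meas[where k = l])
     apply (rule submatrix_carrier[OF u_mat_carrier that])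
    apply (subst submatrix_entry[OF u_mat_carrier that], assumption+)
    apply (rule u_entry_meas)
    using pick_lsub that by auto
  have ea: "(\<lambda>\<theta>. ext_act (m+n) l (u_mat m n \<theta>) w I) \<in> borel_measurable (M0 m n)" for I
    unfolding ext_act_def
    by (cases "I \<in> lsubsets (m+n) l") (auto intro!: borel_measurable_sum borel_measurable_times dm)
  have pp: "(\<lambda>\<theta>. proj_plus m (m+n) l (ext_act (m+n) l (u_mat m n \<theta>) w) I) \<in> borel_measurable (M0 m n)" for I
    unfolding proj_plus_def using ea by simp
  have en: "(\<lambda>\<theta>. ext_norm (m+n) l (proj_plus m (m+n) l (ext_act (m+n) l (u_mat m n \<theta>) w))) \<in> borel_measurable (M0 m n)"
    unfolding ext_norm_def
    by (intro borel_measurable_Max finite_lsub borel_measurable_abs pp)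
  have ip: "(\<lambda>x. inv_pow x \<gamma>) \<in> borel_measurable borel"
    unfolding inv_pow_def by measurable
  show ?thesis using measurable_compose[OF en ip] by simp
qed



lemma det_rowscale:
  assumes A: "A \<in> carrier_mat k k" and B: "B \<in> carrier_mat k k"
    and e: "\<And>i j. i<k \<Longrightarrow> j<k \<Longrightarrow> B $$ (i,j) = f i * A $$ (i,j)"
  shows "det B = (\<Prod>i\<in>{0..<k}. f i) * (det A :: real)"
proof -
  have pi: "p permutes {0..<k} \<Longrightarrow> i \<in> {0..<k} \<Longrightarrow> p i < k" for p i
    using permutes_in_image[of p "{0..<k}" i] by auto
  have "det B = (\<Sum>p\<in>{p. p permutes {0..<k}}. signof p * (\<Prod>i\<in>{0..<k}. f i * A $$ (i, p i)))"
    unfolding det_def'[OF B] by (intro sum.cong refl arg_cong2[where f="(*)"] prod.cong) (auto simp: e pi)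
  also have "\<dots> = (\<Prod>i\<in>{0..<k}. f i) * (\<Sum>p\<in>{p. p permutes {0..<k}}. signof p * (\<Prod>i\<in>{0..<k}. A $$ (i, p i)))"
    by (simp add: prod.distrib sum_distrib_left mult_ac)
  finally show ?thesis unfolding det_def'[OF A] .
qed

definition gd :: "nat \<Rightarrow> (nat \<Rightarrow> real) \<Rightarrow> (nat \<Rightarrow> real) \<Rightarrow> real \<Rightarrow> nat \<Rightarrow> real" where
  "gd m a b t p = (if p < m then t powr a p else t powr (- b (p - m)))"

lemma g_u_entry:
  assumes U: "U \<in> carrier_mat (m+n) (m+n)" and pq: "p < m+n" "q < m+n"
  shows "(g_mat m n a b t * U) $$ (p,q) = gd m a b t p * U $$ (p,q)"
proof -
  have "(g_mat m n a b t * U) $$ (p,q) = (\<Sum>k\<in>{0..<m+n}. g_mat m n a b t $$ (p,k) * U $$ (k,q))"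
    using U pq unfolding g_mat_def by (simp add: scalar_prod_def)
  also have "\<dots> = (\<Sum>k\<in>{0..<m+n}. (if k = p then gd m a b t p * U $$ (p,q) else 0))"
    by (intro sum.cong refl) (auto simp: g_mat_def gd_def pq)
  also have "\<dots> = gd m a b t p * U $$ (p,q)" using pq by simp
  finally show ?thesis .
qed

lemma pick_bij:
  assumes "I \<in> lsubsets d l"
  shows "bij_betw (pick I) {0..<l} I"
proof -
  have cI: "card I = l" "finite I" using assms finite_lsub[of d l] unfolding lsubsets_def
    by (auto intro: finite_subset)
  have inj: "inj_on (pick I) {0..<l}"
    unfolding inj_on_def using pick_mono_le[of _ I] cI
    by (metis atLeastLessThan_iff linorder_neqE_nat less_irrefl)
  have sub: "pick I ` {0..<l} \<subseteq> I" using pick_in_set_le[of _ I] cI by auto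
  have "card (pick I ` {0..<l}) = card I" using card_image[OF inj] cI by simp
  then have "pick I ` {0..<l} = I" using sub cI by (simp add: card_subset_eq)
  then show ?thesis using inj by (simp add: bij_betw_def)
qed

lemma ext_act_g:
  assumes U: "U \<in> carrier_mat (m+n) (m+n)" and I: "I \<in> lsubsets (m+n) l"
  shows "ext_act (m+n) l (g_mat m n a b t * U) w I = (\<Prod>x\<in>I. gd m a b t x) * ext_act (m+n) l U w I"
proof -
  have GU: "g_mat m n a b t * U \<in> carrier_mat (m+n) (m+n)" using U unfolding g_mat_def by auto
  have pr: "(\<Prod>i\<in>{0..<l}. gd m a b t (pick I i)) = (\<Prod>x\<in>I. gd m a b t x)"
    using prod.reindex_bij_betw[OF pick_bij[OF I]] .
  have "det (submatrix (g_mat m n a b t * U) I J) = (\<Prod>x\<in>I. gd m a b t x) * det (submatrix U I J)"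
    if J: "J \<in> lsubsets (m+n) l" for J
    unfolding pr[symmetric]
    apply (rule det_rowscale[OF submatrix_carrier[OF U I J] submatrix_carrier[OF GU I J]])
    apply (subst submatrix_entry[OF GU I J], assumption+)
    apply (subst submatrix_entry[OF U I J], assumption+)
    apply (rule g_u_entry[OF U])
    using pick_lsub[OF I] pick_lsub[OF J] by auto
  then show ?thesis unfolding ext_act_def using I by (simp add: sum_distrib_left mult_ac)
qed



lemma sorted_sub_le:
  fixes f :: "nat \<Rightarrow> real"
  assumes "\<forall>i j. i \<le> j \<and> j < N \<longrightarrow> f j \<le> f i" "S \<subseteq> {0..<N}"
  shows "sum f S \<le> sum f {0..<card S}"
  using assms
proof (induction N arbitrary: S)
  case 0
  then show ?case by simp
next
  case (Suc N)
  have anti: "\<forall>i j. i \<le> j \<and> j < N \<longrightarrow> f j \<le> f i" using Suc.prems(1) by auto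
  show ?case
  proof (cases "N \<in> S")
    case False
    then have "S \<subseteq> {0..<N}" using Suc.prems(2) by (auto simp: less_Suc_eq)
    then show ?thesis using Suc.IH anti by blast
  next
    case True
    define S' where "S' = S - {N}"
    have S': "S' \<subseteq> {0..<N}" using Suc.prems(2) unfolding S'_def by (auto simp: less_Suc_eq)
    have fin: "finite S" using Suc.prems(2) finite_subset by blast
    have cS: "card S = Suc (card S')" using True fin unfolding S'_def
      by (metis card_Suc_Diff1)
    have cle: "card S' \<le> N" using card_mono[OF _ S'] by simp
    have "sum f S = f N + sum f S'" using True fin unfolding S'_def by (simp add: sum.remove)
    also have "\<dots> \<le> f N + sum f {0..<card S'}" using Suc.IH[OF anti S'] by simp
    also have "\<dots> \<le> f (card S') + sum f {0..<card S'}" using Suc.prems(1) cle by auto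
    also have "\<dots> = sum f {0..<card S}" using cS by simp
    finally show ?thesis .
  qed
qed

lemma sorted_sub_ge:
  fixes f :: "nat \<Rightarrow> real"
  assumes "\<forall>i j. i \<le> j \<and> j < N \<longrightarrow> f j \<le> f i" "S \<subseteq> {0..<N}"
  shows "sum f {N - card S..<N} \<le> sum f S"
proof -
  define Cm where "Cm = {0..<N} - S"
  have fin: "finite S" using assms(2) finite_subset by blast
  have cS: "card S \<le> N" using card_mono[OF _ assms(2)] by simp
  have cC: "card Cm = N - card S" unfolding Cm_def using assms(2) fin by (simp add: card_Diff_subset)
  have "sum f Cm \<le> sum f {0..<N - card S}"
    using sorted_sub_le[OF assms(1), of Cm] cC unfolding Cm_def by auto
  moreover have "sum f {0..<N} = sum f S + sum f Cm"
    unfolding Cm_def using assms(2) using sum.subset_diff[of S "{0..<N}" f] by (simp add: add.commute)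
  moreover have "sum f {0..<N} = sum f {0..<N - card S} + sum f {N - card S..<N}"
    using sum.atLeastLessThan_concat[of 0 "N - card S" N f] by simp
  ultimately show ?thesis by linarith
qed

definition ge :: "nat \<Rightarrow> (nat \<Rightarrow> real) \<Rightarrow> (nat \<Rightarrow> real) \<Rightarrow> nat \<Rightarrow> real" where
  "ge m a b x = (if x < m then a x else - b (x - m))"

lemma gd_prod:
  assumes "0 < t" "finite I"
  shows "(\<Prod>x\<in>I. gd m a b t x) = t powr (\<Sum>x\<in>I. ge m a b x)"
  using assms by (simp add: powr_sum gd_def ge_def if_distrib)

lemma expo:
  assumes anta: "\<forall>i j. i \<le> j \<and> j < m \<longrightarrow> a j \<le> a i" and sa: "(\<Sum>i<m. a i) = 1"
    and antb: "\<forall>i j. i \<le> j \<and> j < n \<longrightarrow> b j \<le> b i"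
    and I: "I \<in> lsubsets (m+n) l" and cI: "card (I \<inter> {0..<m}) = min l m"
  shows "wl m a b l \<le> (\<Sum>x\<in>I. ge m a b x)"
proof -
  have IS: "I \<subseteq> {0..<m+n}" "card I = l" using I unfolding lsubsets_def by auto
  have fin: "finite I" using IS finite_subset by blast
  show ?thesis
  proof (cases "l \<le> m")
    case True
    have "card (I \<inter> {0..<m}) = card I" using cI IS True by simp
    then have "I \<inter> {0..<m} = I" using fin by (metis Int_lower1 card_subset_eq)
    then have Im: "I \<subseteq> {0..<m}" by blast
    have "(\<Sum>x\<in>I. ge m a b x) = sum a I" using Im by (intro sum.cong) (auto simp: ge_def)
    moreover have "sum a {m - card I..<m} \<le> sum a I" by (rule sorted_sub_ge[OF anta Im])
    ultimately show ?thesis using True IS unfolding wl_def by simp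
  next
    case False
    have "card (I \<inter> {0..<m}) = card {0..<m}" using cI False by simp
    then have "I \<inter> {0..<m} = {0..<m}" by (metis Int_lower2 card_subset_eq finite_atLeastLessThan)
    then have sub: "{0..<m} \<subseteq> I" by blast
    define I2 where "I2 = I - {0..<m}"
    have split: "I = {0..<m} \<union> I2" "{0..<m} \<inter> I2 = {}" using sub unfolding I2_def by auto
    have cI2: "card I2 = l - m" unfolding I2_def using sub fin IS by (simp add: card_Diff_subset)
    define J where "J = (\<lambda>x. x - m) ` I2"
    have inj: "inj_on (\<lambda>x. x - m) I2" unfolding I2_def inj_on_def by auto
    have cJ: "card J = l - m" unfolding J_def using card_image[OF inj] cI2 by simp
    have Jsub: "J \<subseteq> {0..<n}" unfolding J_def I2_def using IS by auto
    have finI2: "finite I2" using fin unfolding I2_def by simp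
    have "(\<Sum>x\<in>I. ge m a b x) = (\<Sum>x\<in>{0..<m}. ge m a b x) + (\<Sum>x\<in>I2. ge m a b x)"
      using split finI2 by (simp add: sum.union_disjoint)
    also have "(\<Sum>x\<in>{0..<m}. ge m a b x) = 1" using sa by (simp add: ge_def atLeast0LessThan)
    also have "(\<Sum>x\<in>I2. ge m a b x) = - (\<Sum>x\<in>I2. b (x - m))"
      by (simp add: ge_def I2_def sum_negf[symmetric])
    also have "(\<Sum>x\<in>I2. b (x - m)) = sum b J"
      unfolding J_def using sum.reindex[OF inj, of b] by simp
    finally have eq: "(\<Sum>x\<in>I. ge m a b x) = 1 - sum b J" by simp
    have "sum b J \<le> sum b {0..<l - m}" using sorted_sub_le[OF antb Jsub] cJ by simp
    then show ?thesis using eq False unfolding wl_def by (simp add: atLeast0LessThan)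
  qed
qed



lemma lsub_ne: "l \<le> d \<Longrightarrow> {0..<l} \<in> lsubsets d l"
  unfolding lsubsets_def by auto

lemma en_ge: "l \<le> d \<Longrightarrow> I \<in> lsubsets d l \<Longrightarrow> \<bar>v I\<bar> \<le> ext_norm d l v"
  unfolding ext_norm_def by (rule Max_ge) (auto simp: finite_lsub)

lemma en_in: "l \<le> d \<Longrightarrow> \<exists>I\<in>lsubsets d l. ext_norm d l v = \<bar>v I\<bar>"
proof -
  assume l: "l \<le> d"
  have "ext_norm d l v \<in> (\<lambda>I. \<bar>v I\<bar>) ` lsubsets d l"
    unfolding ext_norm_def by (rule Max_in) (use lsub_ne[OF l] finite_lsub in auto)
  then show ?thesis by auto
qed

lemma en_nonneg: "l \<le> d \<Longrightarrow> 0 \<le> ext_norm d l v"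
  using en_ge[OF _ lsub_ne] by (meson abs_ge_zero order_trans)

lemma en_scale: assumes l: "l \<le> d" shows "ext_norm d l (\<lambda>I. c * v I) = \<bar>c\<bar> * ext_norm d l v"
proof (rule antisym)
  obtain I where I: "I \<in> lsubsets d l" "ext_norm d l (\<lambda>I. c * v I) = \<bar>c * v I\<bar>" using en_in[OF l] by blast
  show "ext_norm d l (\<lambda>I. c * v I) \<le> \<bar>c\<bar> * ext_norm d l v"
    using I en_ge[OF l I(1), of v] by (simp add: abs_mult mult_left_mono)
next
  obtain I where I: "I \<in> lsubsets d l" "ext_norm d l v = \<bar>v I\<bar>" using en_in[OF l] by blast
  show "\<bar>c\<bar> * ext_norm d l v \<le> ext_norm d l (\<lambda>I. c * v I)"
    using I en_ge[OF l I(1), of "\<lambda>I. c * v I"] by (simp add: abs_mult)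
qed

lemma ext_act_scale: "ext_act d l A (\<lambda>I. c * v I) = (\<lambda>I. c * ext_act d l A v I)"
  unfolding ext_act_def by (auto simp: sum_distrib_left mult_ac)

lemma proj_scale: "proj_plus m d l (\<lambda>I. c * v I) = (\<lambda>I. c * proj_plus m d l v I)"
  unfolding proj_plus_def by auto

lemma wedge_smult:
  assumes V: "V \<in> carrier_mat d l"
  shows "wedge d l (k \<cdot>\<^sub>m V) = (\<lambda>I. k ^ l * wedge d l V I)"
proof -
  have "submatrix (k \<cdot>\<^sub>m V) I {0..<l} = k \<cdot>\<^sub>m submatrix V I {0..<l}" for I
  proof (rule eq_matI)
    fix i j assume ij: "i < dim_row (k \<cdot>\<^sub>m submatrix V I {0..<l})" "j < dim_col (k \<cdot>\<^sub>m submatrix V I {0..<l})"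
    then have i: "i < card {a. a < dim_row V \<and> a \<in> I}" and j: "j < card {a. a < dim_col V \<and> a \<in> {0..<l}}"
      by (auto simp: dim_submatrix)
    show "submatrix (k \<cdot>\<^sub>m V) I {0..<l} $$ (i, j) = (k \<cdot>\<^sub>m submatrix V I {0..<l}) $$ (i, j)"
      using ij pick_le[OF i] pick_le[OF j] by (simp add: submatrix_def)
  qed (auto simp: submatrix_def)
  moreover have "dim_col (submatrix V I {0..<l}) = l" for I
    using V by (simp add: dim_submatrix)
  ultimately show ?thesis unfolding wedge_def by (auto intro!: ext)
qed

lemma key:
  assumes t: "1 < t"
    and anta: "\<forall>i j. i \<le> j \<and> j < m \<longrightarrow> a j \<le> a i" and sa: "(\<Sum>i<m. a i) = 1"
    and antb: "\<forall>i j. i \<le> j \<and> j < n \<longrightarrow> b j \<le> b i"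
    and l: "l \<le> m + n" and U: "U \<in> carrier_mat (m+n) (m+n)"
  shows "t powr wl m a b l * ext_norm (m+n) l (proj_plus m (m+n) l (ext_act (m+n) l U w))
     \<le> ext_norm (m+n) l (ext_act (m+n) l (g_mat m n a b t * U) w)"
proof -
  obtain I where I: "I \<in> lsubsets (m+n) l"
    "ext_norm (m+n) l (proj_plus m (m+n) l (ext_act (m+n) l U w)) = \<bar>proj_plus m (m+n) l (ext_act (m+n) l U w) I\<bar>"
    using en_in[OF l] by blast
  have N0: "0 \<le> ext_norm (m+n) l (ext_act (m+n) l (g_mat m n a b t * U) w)" using en_nonneg[OF l] .
  show ?thesis
  proof (cases "card (I \<inter> {0..<m}) = min l m")
    case False
    then show ?thesis using I N0 unfolding proj_plus_def by simp
  next
    case True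
    have finI: "finite I" using I(1) finite_lsub[of "m+n" l] unfolding lsubsets_def
      by (auto intro: finite_subset)
    have e: "wl m a b l \<le> (\<Sum>x\<in>I. ge m a b x)" by (rule expo[OF anta sa antb I(1) True])
    have "t powr wl m a b l * \<bar>ext_act (m+n) l U w I\<bar> \<le> t powr (\<Sum>x\<in>I. ge m a b x) * \<bar>ext_act (m+n) l U w I\<bar>"
      using e t by (intro mult_right_mono) auto
    also have "\<dots> = \<bar>ext_act (m+n) l (g_mat m n a b t * U) w I\<bar>"
    proof -
      have tp: "0 < t" using t by simp
      show ?thesis unfolding ext_act_g[OF U I(1)] gd_prod[OF tp finI] using t by (simp add: abs_mult)
    qed
    also have "\<dots> \<le> ext_norm (m+n) l (ext_act (m+n) l (g_mat m n a b t * U) w)"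
      by (rule en_ge[OF l I(1)])
    finally show ?thesis using I True unfolding proj_plus_def by simp
  qed
qed

lemma ip_mono:
  assumes "0 \<le> \<gamma>" "0 < k" "0 \<le> y" "k * y \<le> x"
  shows "inv_pow x \<gamma> \<le> ennreal (k powr - \<gamma>) * inv_pow y \<gamma>"
proof (cases "y = 0")
  case True
  have "0 < k powr - \<gamma>" using assms by simp
  then show ?thesis using True by (simp add: inv_pow_def ennreal_mult_top)
next
  case False
  then have y: "0 < y" using assms by simp
  then have x: "0 < x" using assms by (meson mult_pos_pos order_less_le_trans)
  have "x powr - \<gamma> \<le> (k*y) powr - \<gamma>"
    using assms x y by (intro powr_mono2') auto
  also have "\<dots> = k powr - \<gamma> * y powr - \<gamma>" using assms y by (simp add: powr_mult)
  finally show ?thesis using x y False by (simp add: inv_pow_def ennreal_mult[symmetric])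
qed

lemma ip_scale:
  assumes "0 < c" "0 \<le> x"
  shows "inv_pow (c * x) \<gamma> = ennreal (c powr - \<gamma>) * inv_pow x \<gamma>"
proof (cases "x = 0")
  case True
  have "0 < c powr - \<gamma>" using assms by simp
  then show ?thesis using True by (simp add: inv_pow_def ennreal_mult_top)
next
  case False
  then show ?thesis using assms by (simp add: inv_pow_def powr_mult ennreal_mult[symmetric])
qed

lemma ip_split:
  assumes "0 \<le> \<eta>" "\<eta> \<le> \<gamma>" "0 \<le> x"
  shows "inv_pow x \<eta> \<le> 1 + inv_pow x \<gamma>"
proof (cases "x = 0")
  case True then show ?thesis by (simp add: inv_pow_def)
next
  case False
  then have x: "0 < x" using assms by simp
  have "x powr - \<eta> \<le> 1 + x powr - \<gamma>"
  proof (cases "x \<le> 1")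
    case True
    then have "x powr - \<eta> \<le> x powr - \<gamma>" using x assms by (intro powr_mono') auto
    then show ?thesis by simp
  next
    case False
    then have "1 \<le> x powr \<eta>" using assms by (intro ge_one_powr_ge_zero) auto
    then have "x powr - \<eta> \<le> 1" by (simp add: powr_minus_divide divide_le_eq)
    then show ?thesis by (smt (verit) powr_ge_zero)
  qed
  then have "ennreal (x powr - \<eta>) \<le> ennreal (1 + x powr - \<gamma>)" by (rule ennreal_leI)
  also have "\<dots> = 1 + ennreal (x powr - \<gamma>)" by (simp add: ennreal_plus)
  finally show ?thesis using x by (simp add: inv_pow_def)
qed



theorem proposition5p1:
  fixes m n :: nat and a b :: "nat \<Rightarrow> real"
    and c :: "nat \<Rightarrow> nat \<Rightarrow> real" and W K :: "nat \<Rightarrow> nat \<Rightarrow> real set"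
    and s :: "nat \<Rightarrow> nat \<Rightarrow> real" and \<eta>l :: "nat \<Rightarrow> real"
  assumes "1 \<le> m" and "1 \<le> n"
    and "\<forall>i<m. 0 < a i" and "\<forall>i j. i \<le> j \<and> j < m \<longrightarrow> a j \<le> a i" and "(\<Sum>i<m. a i) = 1"
    and "\<forall>j<n. 0 < b j" and "\<forall>i j. i \<le> j \<and> j < n \<longrightarrow> b j \<le> b i" and "(\<Sum>j<n. b j) = 1"
    and "\<forall>i<m. \<forall>j<n. 0 < c i j \<and> c i j < 1 \<and> finite (W i j) \<and> open_set_condition (c i j) (W i j)
           \<and> is_limit_set (c i j) (W i j) (K i j) \<and> s i j = hausdorff_dim (K i j) \<and> 0 < s i j"
    and "\<forall>l\<in>{1..m + n - 1}. 0 < \<eta>l l \<and>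
           ereal (\<eta>l l) < crit_exp m n c (\<lambda>i j. hausdorff_prob (s i j) (K i j)) l"
  shows "\<exists>C>0. \<forall>l\<in>{1..m + n - 1}. \<forall>r\<in>Xi m n c. \<forall>t>1. \<forall>V \<in> carrier_mat (m + n) l.
           wedge (m + n) l V \<noteq> (\<lambda>_. 0) \<longrightarrow>
           (\<integral>\<^sup>+ x. inv_pow (ext_norm (m + n) l
                 (ext_act (m + n) l (g_mat m n a b t * u_mat m n x) (wedge (m + n) l V))) (\<eta>l l)
              \<partial>mu_r m n (\<lambda>i j. hausdorff_prob (s i j) (K i j)) r)
           \<le> ennreal (C * t powr (- Min ((\<lambda>k. wl m a b k * \<eta>l k) ` {1..m + n - 1}))
                        * ext_norm (m + n) l (wedge (m + n) l V) powr (- \<eta>l l))"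
proof -
  define \<mu>H where "\<mu>H = (\<lambda>i j. hausdorff_prob (s i j) (K i j))"
  define L where "L = {1..m + n - 1}"
  define \<eta>0 where "\<eta>0 = Min ((\<lambda>k. wl m a b k * \<eta>l k) ` L)"
  define G where "G = (\<lambda>l \<gamma> V r. \<integral>\<^sup>+ \<theta>. inv_pow (ext_norm (m + n) l
            (proj_plus m (m + n) l (ext_act (m + n) l (u_mat m n \<theta>) (wedge (m + n) l V)))) \<gamma>
          \<partial>mu_r m n \<mu>H r)"
  note anta = assms(4) and sa = assms(5) and antb = assms(7)
  have ex: "\<exists>p. \<eta>l l < fst p \<and> 0 < snd p \<and> (\<forall>V \<in> carrier_mat (m + n) l. \<forall>r \<in> Xi m n c.
       ext_norm (m + n) l (wedge (m + n) l V) = 1 \<longrightarrow> G l (fst p) V r < ennreal (snd p))"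
    if l: "l \<in> L" for l
  proof -
    have "ereal (\<eta>l l) < crit_exp m n c \<mu>H l" using assms(10) l unfolding L_def \<mu>H_def by blast
    then obtain x where "x \<in> ereal ` {\<gamma>. 0 \<le> \<gamma> \<and> (\<exists>C>0. \<forall>V \<in> carrier_mat (m + n) l. \<forall>r \<in> Xi m n c.
       ext_norm (m + n) l (wedge (m + n) l V) = 1 \<longrightarrow>
       (\<integral>\<^sup>+ \<theta>. inv_pow (ext_norm (m + n) l
            (proj_plus m (m + n) l (ext_act (m + n) l (u_mat m n \<theta>) (wedge (m + n) l V)))) \<gamma>
          \<partial>mu_r m n \<mu>H r) < ennreal C)}" "ereal (\<eta>l l) < x"
      unfolding crit_exp_def less_Sup_iff by blast
    then obtain \<gamma> C where "\<eta>l l < \<gamma>" "0 < C" "\<forall>V \<in> carrier_mat (m + n) l. \<forall>r \<in> Xi m n c.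
       ext_norm (m + n) l (wedge (m + n) l V) = 1 \<longrightarrow> G l \<gamma> V r < ennreal C"
      unfolding G_def by auto
    then show ?thesis by (intro exI[of _ "(\<gamma>, C)"]) auto
  qed
  then obtain p where p: "\<And>l. l \<in> L \<Longrightarrow> \<eta>l l < fst (p l) \<and> 0 < snd (p l) \<and> (\<forall>V \<in> carrier_mat (m + n) l. \<forall>r \<in> Xi m n c.
       ext_norm (m + n) l (wedge (m + n) l V) = 1 \<longrightarrow> G l (fst (p l)) V r < ennreal (snd (p l)))"
    by metis
  define C where "C = 1 + (\<Sum>l\<in>L. 1 + snd (p l))"
  have Cge: "1 + snd (p l) \<le> C" if "l \<in> L" for l
  proof -
    have "1 + snd (p l) \<le> (\<Sum>l\<in>L. 1 + snd (p l))"
    proof (rule member_le_sum)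
      show "0 \<le> 1 + snd (p x)" if "x \<in> L - {l}" for x using p[of x] that by fastforce
    qed (use that in \<open>auto simp: L_def\<close>)
    then show ?thesis unfolding C_def by simp
  qed
  have Cpos: "0 < C" unfolding C_def
    by (smt (verit) p sum_nonneg)
  have main: "(\<integral>\<^sup>+ x. inv_pow (ext_norm (m + n) l
                 (ext_act (m + n) l (g_mat m n a b t * u_mat m n x) (wedge (m + n) l V))) (\<eta>l l)
              \<partial>mu_r m n \<mu>H r)
           \<le> ennreal (C * t powr (- \<eta>0) * ext_norm (m + n) l (wedge (m + n) l V) powr (- \<eta>l l))"
    if l: "l \<in> L" and r: "r \<in> Xi m n c" and t: "1 < t" and V: "V \<in> carrier_mat (m + n) l"
      and nz: "wedge (m + n) l V \<noteq> (\<lambda>_. 0)" for l r t V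
  proof -
    define d where "d = m + n"
    have ld: "l \<le> d" "1 \<le> l" using l unfolding L_def d_def by auto
    define N where "N = ext_norm d l (wedge d l V)"
    obtain I where I: "wedge d l V I \<noteq> 0" using nz unfolding d_def by auto
    then have Il: "I \<in> lsubsets d l" unfolding wedge_def by (auto split: if_splits)
    have Npos: "0 < N" using en_ge[OF ld(1) Il, of "wedge d l V"] I unfolding N_def by linarith
    define V' where "V' = (N powr (- 1 / l)) \<cdot>\<^sub>m V"
    have V': "V' \<in> carrier_mat d l" using V unfolding V'_def d_def by simp
    have pw: "(N powr (- 1 / l)) ^ l = 1 / N"
    proof -
      have "(N powr (- 1 / l)) ^ l = (N powr (- 1 / l)) powr real l" using Npos by (simp add: powr_realpow)
      also have "\<dots> = N powr (-1)" using ld by (simp add: powr_powr)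
      finally show ?thesis using Npos by (simp add: powr_minus_divide)
    qed
    have wV': "wedge d l V' = (\<lambda>I. (1 / N) * wedge d l V I)"
      unfolding V'_def using wedge_smult[OF V[folded d_def]] pw by simp
    have wV: "wedge d l V = (\<lambda>I. N * wedge d l V' I)" unfolding wV' using Npos by simp
    have nV': "ext_norm d l (wedge d l V') = 1"
      unfolding wV' en_scale[OF ld(1)] using Npos unfolding N_def by simp
    define \<gamma> where "\<gamma> = fst (p l)"
    have \<gamma>: "\<eta>l l < \<gamma>" "G l \<gamma> V' r < ennreal (snd (p l))" using p[OF l] V' nV' r unfolding \<gamma>_def d_def by auto
    have \<eta>pos: "0 < \<eta>l l" using assms(10) l unfolding L_def by auto
    define P' where "P' = (\<lambda>\<theta>. ext_norm d l (proj_plus m d l (ext_act d l (u_mat m n \<theta>) (wedge d l V'))))"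
    define k where "k = t powr wl m a b l"
    have kpos: "0 < k" using t unfolding k_def by simp
    define A where "A = ennreal (k powr - \<eta>l l) * ennreal (N powr - \<eta>l l)"
    have pt: "inv_pow (ext_norm d l (ext_act d l (g_mat m n a b t * u_mat m n \<theta>) (wedge d l V))) (\<eta>l l)
         \<le> A * (1 + inv_pow (P' \<theta>) \<gamma>)" for \<theta>
    proof -
      have P'nn: "0 \<le> P' \<theta>" unfolding P'_def using en_nonneg[OF ld(1)] .
      have Peq: "ext_norm d l (proj_plus m d l (ext_act d l (u_mat m n \<theta>) (wedge d l V))) = N * P' \<theta>"
        unfolding wV ext_act_scale proj_scale en_scale[OF ld(1)] P'_def using Npos by simp
      have kk: "k * (N * P' \<theta>) \<le> ext_norm d l (ext_act d l (g_mat m n a b t * u_mat m n \<theta>) (wedge d l V))"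
        using key[where w = "wedge d l V", OF t anta sa antb ld(1)[unfolded d_def] u_mat_carrier[of m n \<theta>]] Peq
        unfolding k_def d_def by simp
      have "inv_pow (ext_norm d l (ext_act d l (g_mat m n a b t * u_mat m n \<theta>) (wedge d l V))) (\<eta>l l)
          \<le> ennreal (k powr - \<eta>l l) * inv_pow (N * P' \<theta>) (\<eta>l l)"
        by (rule ip_mono) (use \<eta>pos kpos Npos P'nn kk in auto)
      also have "\<dots> = A * inv_pow (P' \<theta>) (\<eta>l l)"
        unfolding A_def ip_scale[OF Npos P'nn] by (simp add: mult.assoc)
      also have "\<dots> \<le> A * (1 + inv_pow (P' \<theta>) \<gamma>)"
        by (intro mult_left_mono ip_split) (use \<eta>pos \<gamma> P'nn in auto)
      finally show ?thesis .
    qed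
    have measeq: "measurable (mu_r m n \<mu>H r) (borel :: ennreal measure) = measurable (M0 m n) borel"
      unfolding \<mu>H_def by (rule measurable_cong_sets[OF mu_r_sets refl])
    have Gm: "(\<lambda>\<theta>. inv_pow (P' \<theta>) \<gamma>) \<in> borel_measurable (mu_r m n \<mu>H r)"
      unfolding measeq P'_def d_def by (rule proj_meas) (use ld in \<open>auto simp: d_def\<close>)
    have mass: "emeasure (mu_r m n \<mu>H r) (space (mu_r m n \<mu>H r)) \<le> 1"
      unfolding \<mu>H_def by (rule mu_r_mass)
    have "(\<integral>\<^sup>+ x. inv_pow (ext_norm d l (ext_act d l (g_mat m n a b t * u_mat m n x) (wedge d l V))) (\<eta>l l)
              \<partial>mu_r m n \<mu>H r) \<le> (\<integral>\<^sup>+ x. A * (1 + inv_pow (P' x) \<gamma>) \<partial>mu_r m n \<mu>H r)"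
      by (rule nn_integral_mono) (rule pt)
    also have "\<dots> = A * ((\<integral>\<^sup>+ x. 1 \<partial>mu_r m n \<mu>H r) + (\<integral>\<^sup>+ x. inv_pow (P' x) \<gamma> \<partial>mu_r m n \<mu>H r))"
      using Gm by (simp add: nn_integral_cmult nn_integral_add)
    also have "\<dots> \<le> A * (1 + ennreal (snd (p l)))"
    proof (intro mult_left_mono add_mono)
      show "(\<integral>\<^sup>+ x. 1 \<partial>mu_r m n \<mu>H r) \<le> 1" using mass by simp
      show "(\<integral>\<^sup>+ x. inv_pow (P' x) \<gamma> \<partial>mu_r m n \<mu>H r) \<le> ennreal (snd (p l))"
        using \<gamma>(2) unfolding G_def P'_def d_def by simp
    qed auto
    also have "\<dots> = ennreal (k powr - \<eta>l l * N powr - \<eta>l l * (1 + snd (p l)))"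
    proof -
      have sp: "0 \<le> snd (p l)" using p[OF l] by simp
      have "1 + ennreal (snd (p l)) = ennreal (1 + snd (p l))" using sp by simp
      moreover have "ennreal (k powr - \<eta>l l * N powr - \<eta>l l * (1 + snd (p l)))
          = ennreal (k powr - \<eta>l l) * ennreal (N powr - \<eta>l l) * ennreal (1 + snd (p l))"
        using sp by (simp add: ennreal_mult del: ennreal_plus)
      ultimately show ?thesis unfolding A_def by simp
    qed
    also have "\<dots> \<le> ennreal (C * t powr (- \<eta>0) * N powr (- \<eta>l l))"
    proof (rule ennreal_leI)
      have "\<eta>0 \<le> wl m a b l * \<eta>l l" unfolding \<eta>0_def using l by (intro Min_le) (auto simp: L_def)
      then have "k powr - \<eta>l l \<le> t powr (- \<eta>0)" unfolding k_def using t
        by (simp add: powr_powr)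
      moreover have "1 + snd (p l) \<le> C" using Cge[OF l] .
      moreover have "0 \<le> 1 + snd (p l)" using p[OF l] by simp
      ultimately have "k powr - \<eta>l l * (1 + snd (p l)) \<le> t powr (- \<eta>0) * C"
        by (intro mult_mono) auto
      then show "k powr - \<eta>l l * N powr - \<eta>l l * (1 + snd (p l)) \<le> C * t powr (- \<eta>0) * N powr (- \<eta>l l)"
        using mult_right_mono[of "k powr - \<eta>l l * (1 + snd (p l))" "t powr (- \<eta>0) * C" "N powr - \<eta>l l"]
        by (simp add: mult_ac)
    qed
    finally show ?thesis unfolding N_def d_def .
  qed
  show ?thesis
    apply (rule exI[of _ C])
    using Cpos main unfolding L_def \<eta>0_def \<mu>H_def by blast
qed

end
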